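(* Let $\{X_1,X_2,\dots\}$ be a random dense countable subset of $(0,1)$ satisfying the independence condition and such that for every Borel set $B\subset(0,1)$ of Lebesgue measure $0$, $B\cap\{X_1,X_2,\dots\}=\emptyset$ a.s. If $\Pr(X_k=X_l)=0$ whenever $k\ne l$, then for every $n$ the joint distribution of $(X_1,\dots,X_n)$ is absolutely continuous with respect to Lebesgue measure on $(0,1)^n$.
   Context: A random countable subset of $(0,1)$ is given by random variables $X_1,X_2,\dots:\Omega\to(0,1)$ on a probability space, the set being $\omega\mapsto\{X_1(\omega),X_2(\omega),\dots\}$. It is dense if this set is dense in $(0,1)$ for a.e. $\omega$. Two random countable sets $\{X_k\},\{Y_k\}$ are identically distributed if some probability measure on $(0,1)^\infty\times(0,1)^\infty$ has marginals the laws of $(X_k)_k$ and $(Y_k)_k$ and is concentrated on pairs $(x,y)$ with $\{x_1,x_2,\dots\}=\{y_1,y_2,\dots\}$. Independence condition. For every $n\ge2$ and every $0=a_0<\dots<a_n=1$ there exist random variables $Y_{i,j}$ ($i\le n$, $j\ge1$) on some probability space such that: - $\{Y_{i,j}\}$ is distributed like $\{X_k\}$; - $Y_{i,j}\in[a_{i-1},a_i)$ a.s.; - the sequences $(Y_{i,j})_j$ are independent. *)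

theory Defs
  imports "HOL-Probability.Probability"
begin

definition seq_law :: "'a measure \<Rightarrow> (nat \<Rightarrow> 'a \<Rightarrow> real) \<Rightarrow> (nat \<Rightarrow> real) measure" where
  "seq_law M X = distr M (PiM UNIV (\<lambda>_. borel)) (\<lambda>\<omega> k. X k \<omega>)"

text \<open>Two sequence laws P, Q define identically distributed random countable sets:
  some probability measure on pairs of sequences has marginals P and Q and is
  concentrated on pairs with the same set of values.\<close>
definition same_random_set :: "(nat \<Rightarrow> real) measure \<Rightarrow> (nat \<Rightarrow> real) measure \<Rightarrow> bool" where
  "same_random_set P Q \<longleftrightarrow>
     (\<exists>\<mu>. prob_space \<mu> \<and>
        sets \<mu> = sets (PiM UNIV (\<lambda>_::nat. borel :: real measure) \<Otimes>\<^sub>M PiM UNIV (\<lambda>_::nat. borel :: real measure)) \<and>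
        distr \<mu> (PiM UNIV (\<lambda>_. borel)) fst = P \<and>
        distr \<mu> (PiM UNIV (\<lambda>_. borel)) snd = Q \<and>
        (AE p in \<mu>. range (fst p) = range (snd p)))"

text \<open>Indices: i < n (interval [a i, a (i+1))), j :: nat.
  The double family Y i j is enumerated as the sequence k \<mapsto> Y (k mod n) (k div n).
  The auxiliary probability space is taken on the canonical type nat \<Rightarrow> nat \<Rightarrow> real
  (no loss of generality: push forward along \<omega> \<mapsto> (\<lambda>i j. Y i j \<omega>)).\<close>
definition independence_condition :: "'a measure \<Rightarrow> (nat \<Rightarrow> 'a \<Rightarrow> real) \<Rightarrow> bool" where
  "independence_condition M X \<longleftrightarrow>
    (\<forall>n::nat. \<forall>a::nat \<Rightarrow> real.
       n \<ge> 2 \<and> a 0 = 0 \<and> a n = 1 \<and> (\<forall>i<n. a i < a (Suc i)) \<longrightarrow>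
       (\<exists>(N :: (nat \<Rightarrow> nat \<Rightarrow> real) measure) (Y :: nat \<Rightarrow> nat \<Rightarrow> (nat \<Rightarrow> nat \<Rightarrow> real) \<Rightarrow> real).
          prob_space N \<and>
          (\<forall>i<n. \<forall>j. Y i j \<in> borel_measurable N) \<and>
          same_random_set (seq_law N (\<lambda>k. Y (k mod n) (k div n))) (seq_law M X) \<and>
          (\<forall>i<n. \<forall>j. AE \<omega> in N. a i \<le> Y i j \<omega> \<and> Y i j \<omega> < a (Suc i)) \<and>
          prob_space.indep_vars N (\<lambda>_. PiM UNIV (\<lambda>_. borel)) (\<lambda>i \<omega>. (\<lambda>j. Y i j \<omega>)) {..<n}))"

end

theory Submission
  imports Defs
begin


abbreviation SQ :: "(nat \<Rightarrow> real) measure" where "SQ \<equiv> PiM UNIV (\<lambda>_::nat. borel :: real measure)"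

lemma transfer_range:
  assumes "same_random_set P Q" "H \<in> sets SQ"
    and inv: "\<And>z z'. range z = range z' \<Longrightarrow> z \<in> H \<Longrightarrow> z' \<in> H"
  shows "emeasure P H = emeasure Q H"
proof -
  obtain \<mu> where mu: "prob_space \<mu>" "sets \<mu> = sets (SQ \<Otimes>\<^sub>M SQ)"
    "distr \<mu> SQ fst = P" "distr \<mu> SQ snd = Q" "AE p in \<mu>. range (fst p) = range (snd p)"
    using assms(1) unfolding same_random_set_def by blast
  have f: "fst \<in> measurable \<mu> SQ" and s: "snd \<in> measurable \<mu> SQ"
    using measurable_cong_sets[OF mu(2) refl] by auto
  have "emeasure P H = emeasure \<mu> (fst -` H \<inter> space \<mu>)"
    unfolding mu(3)[symmetric] using f assms(2) by (rule emeasure_distr)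
  also have "\<dots> = emeasure \<mu> (snd -` H \<inter> space \<mu>)"
  proof (rule emeasure_eq_AE)
    show "AE x in \<mu>. (x \<in> fst -` H \<inter> space \<mu>) = (x \<in> snd -` H \<inter> space \<mu>)"
      using mu(5) by eventually_elim (use inv in blast)
  qed (use f s assms(2) in auto)
  also have "\<dots> = emeasure Q H"
    unfolding mu(4)[symmetric] using s assms(2) by (rule emeasure_distr[symmetric])
  finally show ?thesis .
qed



lemma (in prob_space) indep_sets_reindex:
  assumes ind: "indep_sets F (\<sigma> ` K)" and inj: "inj_on \<sigma> K"
  shows "indep_sets (\<lambda>k. F (\<sigma> k)) K"
  unfolding indep_sets_def
proof (intro conjI ballI allI impI)
  fix k assume "k \<in> K" then show "F (\<sigma> k) \<subseteq> events"
    using ind unfolding indep_sets_def by auto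
next
  fix J A assume J: "J \<subseteq> K" "J \<noteq> {}" "finite J" and A: "A \<in> (\<Pi> j\<in>J. F (\<sigma> j))"
  define A' where "A' = (\<lambda>i. A (the_inv_into J \<sigma> i))"
  have injJ: "inj_on \<sigma> J" using inj J(1) inj_on_subset by blast
  have A'\<sigma>: "A' (\<sigma> j) = A j" if "j \<in> J" for j
    unfolding A'_def using the_inv_into_f_f[OF injJ that] by simp
  have "\<sigma> ` J \<subseteq> \<sigma> ` K" "\<sigma> ` J \<noteq> {}" "finite (\<sigma> ` J)" using J by auto
  moreover have "A' \<in> (\<Pi> i\<in>\<sigma> ` J. F i)" using A A'\<sigma> by auto
  ultimately have "prob (\<Inter>i\<in>\<sigma> ` J. A' i) = (\<Prod>i\<in>\<sigma> ` J. prob (A' i))"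
    using ind unfolding indep_sets_def by blast
  moreover have "(\<Inter>i\<in>\<sigma> ` J. A' i) = (\<Inter>j\<in>J. A j)" using A'\<sigma> by auto
  moreover have "(\<Prod>i\<in>\<sigma> ` J. prob (A' i)) = (\<Prod>j\<in>J. prob (A j))"
    using prod.reindex[OF injJ, of "\<lambda>i. prob (A' i)"] A'\<sigma> by simp
  ultimately show "prob (\<Inter>j\<in>J. A j) = (\<Prod>j\<in>J. prob (A j))" by simp
qed

lemma (in prob_space) indep_vars_reindex:
  assumes ind: "indep_vars M' X (\<sigma> ` K)" and inj: "inj_on \<sigma> K"
  shows "indep_vars (\<lambda>k. M' (\<sigma> k)) (\<lambda>k. X (\<sigma> k)) K"
  using ind indep_sets_reindex[OF _ inj, of "\<lambda>i. { X i -` A \<inter> space M | A. A \<in> sets (M' i)}"]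
  unfolding indep_vars_def2 by auto

lemma PiM_abs_cont:
  fixes \<nu> :: "'i \<Rightarrow> real measure"
  assumes K: "finite K" and P: "\<And>k. prob_space (\<nu> k)" and S: "\<And>k. sets (\<nu> k) = sets borel"
    and AC: "\<And>k. k \<in> K \<Longrightarrow> absolutely_continuous lborel (\<nu> k)"
  shows "absolutely_continuous (PiM K (\<lambda>_. lborel)) (PiM K \<nu>)"
proof -
  interpret L: product_sigma_finite "\<lambda>_. lborel" by standard
  interpret V: product_prob_space \<nu> using P by (simp add: product_prob_space_def product_prob_space_axioms_def product_sigma_finite_def prob_space_imp_sigma_finite)
  interpret VK: finite_product_sigma_finite \<nu> K
    by (simp add: finite_product_sigma_finite_def finite_product_sigma_finite_axioms_def K V.product_sigma_finite_axioms)
  define f where "f k = RN_deriv lborel (\<nu> k)" for k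
  have fm[measurable]: "f k \<in> borel_measurable borel" for k
    unfolding f_def using borel_measurable_RN_deriv[of lborel "\<nu> k"] by simp
  have dens: "density lborel (f k) = \<nu> k" if "k \<in> K" for k
    unfolding f_def using sigma_finite_measure.density_RN_deriv[OF sigma_finite_lborel AC[OF that]] S by simp
  define g where "g x = (\<Prod>k\<in>K. f k (x k))" for x
  have gm: "g \<in> borel_measurable (PiM K (\<lambda>_. lborel))"
    unfolding g_def by measurable
  have eq: "PiM K \<nu> = density (PiM K (\<lambda>_. lborel)) g"
  proof (rule measure_eqI_PiM_finite[OF K])
    show "sets (PiM K \<nu>) = sets (PiM K \<nu>)" by simp
    show "sets (density (PiM K (\<lambda>_. lborel)) g) = sets (PiM K \<nu>)"
      using S by (auto intro!: sets_PiM_cong)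
    fix A assume A: "\<And>i. i \<in> K \<Longrightarrow> A i \<in> sets (\<nu> i)"
    then have Ab: "\<And>i. i \<in> K \<Longrightarrow> A i \<in> sets borel" using S by auto
    have "emeasure (density (PiM K (\<lambda>_. lborel)) g) (PiE K A)
        = (\<integral>\<^sup>+ x. g x * indicator (PiE K A) x \<partial>PiM K (\<lambda>_. lborel))"
      using Ab gm by (subst emeasure_density) (auto intro!: sets_PiM_I_finite K)
    also have "\<dots> = (\<integral>\<^sup>+ x. (\<Prod>k\<in>K. f k (x k) * indicator (A k) (x k)) \<partial>PiM K (\<lambda>_. lborel))"
    proof (rule nn_integral_cong)
      fix x :: "'i \<Rightarrow> real" assume "x \<in> space (PiM K (\<lambda>_. lborel :: real measure))"
      then have ext: "x \<in> extensional K" by (auto simp: space_PiM PiE_def)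
      have "indicator (PiE K A) x = (\<Prod>k\<in>K. indicator (A k) (x k) :: ennreal)"
        using ext K by (auto simp: indicator_def PiE_def Pi_def)
      then show "g x * indicator (PiE K A) x = (\<Prod>k\<in>K. f k (x k) * indicator (A k) (x k))"
        unfolding g_def by (simp add: prod.distrib)
    qed
    also have "\<dots> = (\<Prod>k\<in>K. \<integral>\<^sup>+ y. f k y * indicator (A k) y \<partial>lborel)"
      using Ab K by (intro L.product_nn_integral_prod) auto
    also have "\<dots> = (\<Prod>k\<in>K. emeasure (\<nu> k) (A k))"
    proof (rule prod.cong[OF refl])
      fix k assume k: "k \<in> K"
      have "emeasure (\<nu> k) (A k) = emeasure (density lborel (f k)) (A k)" using dens[OF k] by simp
      also have "\<dots> = (\<integral>\<^sup>+ y. f k y * indicator (A k) y \<partial>lborel)"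
        using Ab[OF k] by (subst emeasure_density) auto
      finally show "(\<integral>\<^sup>+ y. f k y * indicator (A k) y \<partial>lborel) = emeasure (\<nu> k) (A k)" by simp
    qed
    also have "\<dots> = emeasure (PiM K \<nu>) (PiE K A)"
      using A by (simp add: VK.measure_times)
    finally show "emeasure (PiM K \<nu>) (PiE K A) = emeasure (density (PiM K (\<lambda>_. lborel)) g) (PiE K A)" by simp
  next
    show "range (\<lambda>_::nat. space (PiM K \<nu>)) \<subseteq> prod_algebra K \<nu>"
      using K by (auto simp: space_PiM intro!: prod_algebraI_finite)
    show "(\<Union>i::nat. space (PiM K \<nu>)) = space (PiM K \<nu>)" by simp
    show "emeasure (PiM K \<nu>) (space (PiM K \<nu>)) \<noteq> \<infinity>" for i :: nat
      using prob_space.emeasure_space_1[OF prob_space_PiM[of K \<nu>, OF P]] by simp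
  qed
  show ?thesis unfolding eq by (rule absolutely_continuousI_density[OF gm])
qed



lemma null_distr_iff:
  assumes "F \<in> measurable M N" "H \<in> sets N"
  shows "emeasure (distr M N F) H = 0 \<longleftrightarrow> (AE \<omega> in M. F \<omega> \<notin> H)"
proof -
  have "emeasure (distr M N F) H = emeasure M (F -` H \<inter> space M)"
    using assms by (rule emeasure_distr)
  moreover have "(AE \<omega> in M. F \<omega> \<notin> H) \<longleftrightarrow> emeasure M (F -` H \<inter> space M) = 0"
    by (rule AE_iff_measurable) (use assms in auto)
  ultimately show ?thesis by simp
qed

lemma interval_unique:
  fixes y :: real
  assumes "N > 0" "real i / N \<le> y" "y < (real i + 1) / N" "real i' / N \<le> y" "y < (real i' + 1) / N"
  shows "i = i'"
proof -
  have "real i \<le> N * y" "N * y < real i + 1" "real i' \<le> N * y" "N * y < real i' + 1"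
    using assms by (auto simp: field_simps)
  then have "real i < real i' + 1" "real i' < real i + 1" by linarith+
  then show ?thesis by linarith
qed

lemma separate:
  fixes x :: "nat \<Rightarrow> real"
  assumes x01: "\<forall>k<n. x k \<in> {0<..<1}" and dist: "\<forall>k<n. \<forall>l<n. k \<noteq> l \<longrightarrow> x k \<noteq> x l"
  shows "\<exists>N\<ge>2. \<exists>\<sigma>\<in>PiE {..<n} (\<lambda>_. {..<N}). inj_on \<sigma> {..<n} \<and>
           (\<forall>k<n. real (\<sigma> k) / N \<le> x k \<and> x k < (real (\<sigma> k) + 1) / N)"
proof -
  have ev1: "\<forall>\<^sub>F N in sequentially. \<forall>p\<in>{..<n}\<times>{..<n}. fst p \<noteq> snd p \<longrightarrow> 1 < real N * \<bar>x (fst p) - x (snd p)\<bar>"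
  proof (intro eventually_ball_finite ballI)
    fix p assume p: "p \<in> {..<n}\<times>{..<n}"
    show "\<forall>\<^sub>F N in sequentially. fst p \<noteq> snd p \<longrightarrow> 1 < real N * \<bar>x (fst p) - x (snd p)\<bar>"
    proof (cases "fst p = snd p")
      case False
      then have d: "\<bar>x (fst p) - x (snd p)\<bar> > 0" using dist p by auto
      have "\<forall>\<^sub>F N in sequentially. real N > 1 / \<bar>x (fst p) - x (snd p)\<bar>"
        using filterlim_real_sequentially by (simp add: filterlim_at_top_dense)
      then show ?thesis
        by eventually_elim (use d in \<open>simp add: divide_less_eq\<close>)
    qed simp
  qed simp
  have "\<forall>\<^sub>F N in sequentially. (N::nat) \<ge> 2" by (rule eventually_ge_at_top)
  with ev1 have "\<forall>\<^sub>F N in sequentially. N \<ge> 2 \<and> (\<forall>p\<in>{..<n}\<times>{..<n}. fst p \<noteq> snd p \<longrightarrow> 1 < real N * \<bar>x (fst p) - x (snd p)\<bar>)"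
    by eventually_elim auto
  then obtain N0 where "\<forall>N\<ge>N0. N \<ge> 2 \<and> (\<forall>p\<in>{..<n}\<times>{..<n}. fst p \<noteq> snd p \<longrightarrow> 1 < real N * \<bar>x (fst p) - x (snd p)\<bar>)"
    unfolding eventually_sequentially by blast
  then have "N0 \<ge> 2 \<and> (\<forall>p\<in>{..<n}\<times>{..<n}. fst p \<noteq> snd p \<longrightarrow> 1 < real N0 * \<bar>x (fst p) - x (snd p)\<bar>)"
    by blast
  then obtain N where N2: "N \<ge> 2" and gap: "\<And>k l. k < n \<Longrightarrow> l < n \<Longrightarrow> k \<noteq> l \<Longrightarrow> 1 < real N * \<bar>x k - x l\<bar>"
    by force
  define \<sigma> where "\<sigma> = (\<lambda>k\<in>{..<n}. nat \<lfloor>real N * x k\<rfloor>)"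
  have Npos: "real N > 0" using N2 by simp
  have fl: "real (\<sigma> k) = of_int \<lfloor>real N * x k\<rfloor>" if "k < n" for k
  proof -
    have "0 < real N * x k" using x01 that Npos by auto
    then have "0 \<le> \<lfloor>real N * x k\<rfloor>" by simp
    then show ?thesis unfolding \<sigma>_def using that by simp
  qed
  have b1: "real (\<sigma> k) \<le> real N * x k" "real N * x k < real (\<sigma> k) + 1" if "k < n" for k
    using fl[OF that] by linarith+
  show ?thesis
  proof (intro exI[of _ N] conjI N2 bexI[of _ \<sigma>] allI impI)
    show "inj_on \<sigma> {..<n}"
    proof (rule inj_onI)
      fix k l assume kl: "k \<in> {..<n}" "l \<in> {..<n}" "\<sigma> k = \<sigma> l"
      show "k = l"
      proof (rule ccontr)
        assume "k \<noteq> l"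
        then have "1 < real N * \<bar>x k - x l\<bar>" using gap kl by auto
        moreover have "\<bar>real N * x k - real N * x l\<bar> < 1" using b1[of k] b1[of l] kl by auto
        moreover have "real N * \<bar>x k - x l\<bar> = \<bar>real N * x k - real N * x l\<bar>"
          using Npos by (simp add: abs_mult right_diff_distrib[symmetric])
        ultimately show False by linarith
      qed
    qed
    show "\<sigma> \<in> PiE {..<n} (\<lambda>_. {..<N})"
    proof -
      have "\<sigma> k < N" if "k < n" for k
      proof -
        have "real N * x k < real N" using x01 that Npos by auto
        then have "real (\<sigma> k) < real N" using b1[OF that] by linarith
        then show ?thesis by simp
      qed
      then show ?thesis unfolding \<sigma>_def by auto
    qed
    fix k assume k: "k < n"
    show "real (\<sigma> k) / N \<le> x k" "x k < (real (\<sigma> k) + 1) / N"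
      using b1[OF k] Npos by (auto simp: field_simps)
  qed
qed



lemma key_null:
  fixes \<Omega> :: "'b measure" and Y :: "nat \<Rightarrow> nat \<Rightarrow> 'b \<Rightarrow> real" and n :: nat
  assumes P: "prob_space \<Omega>" and Ym: "\<And>i j. i < N \<Longrightarrow> Y i j \<in> borel_measurable \<Omega>"
    and ind: "prob_space.indep_vars \<Omega> (\<lambda>_. SQ) (\<lambda>i \<omega>. \<lambda>j. Y i j \<omega>) {..<N}"
    and ac: "\<And>i j. i < N \<Longrightarrow> absolutely_continuous lborel (distr \<Omega> borel (Y i j))"
    and \<sigma>: "\<And>k. \<sigma> k < N" "inj_on \<sigma> {..<n}" and n: "n > 0"
    and B: "B \<in> null_sets (PiM {..<n} (\<lambda>_. lborel :: real measure))"
  shows "AE \<omega> in \<Omega>. (\<lambda>k\<in>{..<n}. Y (\<sigma> k) (jj k) \<omega>) \<notin> B"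
proof -
  interpret prob_space \<Omega> by fact
  define Z where "Z k = (\<lambda>\<omega>. Y (\<sigma> k) (jj k) \<omega>)" for k
  have Zm: "Z k \<in> borel_measurable \<Omega>" for k using Ym \<sigma>(1) unfolding Z_def by auto
  have i1: "indep_vars (\<lambda>_. SQ) (\<lambda>i \<omega>. \<lambda>j. Y i j \<omega>) (\<sigma> ` {..<n})"
    using \<sigma>(1) by (intro indep_vars_subset[OF ind]) auto
  have i2: "indep_vars (\<lambda>k. SQ) (\<lambda>k \<omega>. \<lambda>j. Y (\<sigma> k) j \<omega>) {..<n}"
    using indep_vars_reindex[OF i1 \<sigma>(2)] by simp
  have i3: "indep_vars (\<lambda>_. borel) (\<lambda>k \<omega>. (\<lambda>s. s (jj k)) ((\<lambda>j. Y (\<sigma> k) j \<omega>))) {..<n}"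
    by (rule indep_vars_compose2[OF i2]) simp
  then have i3': "indep_vars (\<lambda>_. borel) Z {..<n}" unfolding Z_def by simp
  have eq: "distr \<Omega> (PiM {..<n} (\<lambda>_. borel)) (\<lambda>\<omega>. \<lambda>k\<in>{..<n}. Z k \<omega>) = PiM {..<n} (\<lambda>k. distr \<Omega> borel (Z k))"
  proof -
    have ne: "{..<n} \<noteq> {}" using n by auto
    show ?thesis
      using indep_vars_iff_distr_eq_PiM[where I="{..<n}" and M'="\<lambda>_. borel" and X=Z, OF ne Zm] i3' by simp
  qed
  have ac2: "absolutely_continuous (PiM {..<n} (\<lambda>_. lborel)) (PiM {..<n} (\<lambda>k. distr \<Omega> borel (Z k)))"
  proof (rule PiM_abs_cont)
    show "finite {..<n}" by simp
    show "prob_space (distr \<Omega> borel (Z k))" for k using Zm[of k] by (rule prob_space_distr)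
    show "sets (distr \<Omega> borel (Z k)) = sets borel" for k by simp
    show "absolutely_continuous lborel (distr \<Omega> borel (Z k))" if "k \<in> {..<n}" for k
      unfolding Z_def using ac[OF \<sigma>(1)[of k]] by simp
  qed
  have "B \<in> null_sets (PiM {..<n} (\<lambda>k. distr \<Omega> borel (Z k)))"
    using ac2 B unfolding absolutely_continuous_def by auto
  then have "emeasure (distr \<Omega> (PiM {..<n} (\<lambda>_. borel)) (\<lambda>\<omega>. \<lambda>k\<in>{..<n}. Z k \<omega>)) B = 0"
    unfolding eq by auto
  moreover have "(\<lambda>\<omega>. \<lambda>k\<in>{..<n}. Z k \<omega>) \<in> measurable \<Omega> (PiM {..<n} (\<lambda>_. borel))"
    using Zm by (intro measurable_restrict) auto
  moreover have "B \<in> sets (PiM {..<n} (\<lambda>_. borel))"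
    using B sets_PiM_cong[of "{..<n}" "{..<n}" "\<lambda>_. lborel" "\<lambda>_. borel"] by auto
  ultimately show ?thesis
    using null_distr_iff by (auto simp: Z_def)
qed



definition Hset :: "nat \<Rightarrow> (nat \<Rightarrow> real) set \<Rightarrow> nat \<Rightarrow> (nat \<Rightarrow> real) set" where
  "Hset n B N = {z::nat \<Rightarrow> real. \<exists>s\<in>PiE {..<n} (\<lambda>_. range z). s \<in> B \<and>
        (\<exists>\<sigma>\<in>PiE {..<n} (\<lambda>_. {..<N}). inj_on \<sigma> {..<n} \<and>
           (\<forall>k<n. real (\<sigma> k) / N \<le> s k \<and> s k < (real (\<sigma> k) + 1) / N))}"

lemma Hset_sets:
  assumes Bb[measurable]: "B \<in> sets (PiM {..<n} (\<lambda>_. borel))"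
  shows "Hset n B N \<in> sets SQ"
proof -
  define I where "I = PiE {..<n} (\<lambda>_. UNIV::nat set) \<times> {\<sigma> \<in> PiE {..<n} (\<lambda>_. {..<N}). inj_on \<sigma> {..<n}}"
  define G where "G p = {z \<in> space SQ. (\<lambda>k\<in>{..<n}. z (fst p k)) \<in> B \<and>
     (\<forall>k<n. real (snd p k) / N \<le> z (fst p k) \<and> z (fst p k) < (real (snd p k) + 1) / N)}" for p
  have eq: "Hset n B N = \<Union>(G ` I)"
  proof (rule set_eqI iffI)+
    fix z assume "z \<in> Hset n B N"
    then obtain s \<sigma> where s: "s \<in> PiE {..<n} (\<lambda>_. range z)" "s \<in> B" and
      \<sigma>: "\<sigma> \<in> PiE {..<n} (\<lambda>_. {..<N})" "inj_on \<sigma> {..<n}"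
      "\<forall>k<n. real (\<sigma> k) / N \<le> s k \<and> s k < (real (\<sigma> k) + 1) / N"
      unfolding Hset_def by blast
    define t where "t = (\<lambda>k\<in>{..<n}. SOME l. z l = s k)"
    have zt: "z (t k) = s k" if "k < n" for k
    proof -
      have "s k \<in> range z" using s(1) that by (auto simp: PiE_def Pi_def)
      then have "\<exists>l. z l = s k" by (metis rangeE)
      then show ?thesis unfolding t_def using that by (auto intro: someI_ex)
    qed
    have st: "(\<lambda>k\<in>{..<n}. z (t k)) = s"
      using zt s(1) by (auto simp: PiE_def extensional_def fun_eq_iff)
    have "(t, \<sigma>) \<in> I" unfolding I_def t_def using \<sigma> by auto
    moreover have "z \<in> G (t, \<sigma>)" unfolding G_def using st s zt \<sigma>(3) by (auto simp: space_PiM)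
    ultimately show "z \<in> \<Union>(G ` I)" by blast
  next
    fix z assume "z \<in> \<Union>(G ` I)"
    then obtain t \<sigma> where p: "(t, \<sigma>) \<in> I" "z \<in> G (t, \<sigma>)" by auto
    show "z \<in> Hset n B N"
      unfolding Hset_def
    proof (intro CollectI bexI[of _ "\<lambda>k\<in>{..<n}. z (t k)"] conjI bexI[of _ \<sigma>])
      show "(\<lambda>k\<in>{..<n}. z (t k)) \<in> PiE {..<n} (\<lambda>_. range z)" by auto
    qed (use p in \<open>auto simp: I_def G_def\<close>)
  qed
  have cI: "countable I" unfolding I_def
    by (intro countable_SIGMA countable_PiE countable_finite[OF finite_subset[OF _ finite_PiE[of "{..<n}" "\<lambda>_. {..<N}"]]]) auto
  have "G p \<in> sets SQ" for p
    unfolding G_def by measurable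
  then show ?thesis unfolding eq using cI by (intro sets.countable_UN') auto
qed



lemma XS_meas:
  assumes "\<And>k. X k \<in> borel_measurable M"
  shows "(\<lambda>\<omega> k. X k \<omega>) \<in> measurable M SQ"
  by (rule measurable_PiM_single') (use assms in auto)

lemma HA_sets: "{z::nat\<Rightarrow>real. \<exists>k. z k \<in> W} \<in> sets SQ" if "W \<in> sets borel"
proof -
  have "{z::nat\<Rightarrow>real. \<exists>k. z k \<in> W} = (\<Union>k. {z \<in> space SQ. z k \<in> W})" by (auto simp: space_PiM)
  also have "\<dots> \<in> sets SQ" using that by measurable
  finally show ?thesis .
qed

lemma HN_lemma:
  fixes M :: "'a measure" and X :: "nat \<Rightarrow> 'a \<Rightarrow> real" and n N :: nat
  assumes "prob_space M"
    and Xm[measurable]: "\<And>k. X k \<in> borel_measurable M"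
    and X01: "\<And>k \<omega>. \<omega> \<in> space M \<Longrightarrow> X k \<omega> \<in> {0<..<1}"
    and indc: "independence_condition M X"
    and null: "\<And>B. B \<in> sets borel \<Longrightarrow> B \<subseteq> {0<..<1} \<Longrightarrow> emeasure lborel B = 0 \<Longrightarrow>
                 (AE \<omega> in M. \<forall>k. X k \<omega> \<notin> B)"
    and B: "B \<in> null_sets (PiM {..<n} (\<lambda>_. lborel :: real measure))"
    and npos: "n > 0" and N2: "N \<ge> 2"
  shows "AE \<omega> in M. (\<lambda>k. X k \<omega>) \<notin> Hset n B N"
proof -
  interpret M: prob_space M by fact
  have Bb[measurable]: "B \<in> sets (PiM {..<n} (\<lambda>_. borel))"
    using B sets_PiM_cong[of "{..<n}" "{..<n}" "\<lambda>_. lborel" "\<lambda>_. borel"] by auto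
  have Hs: "Hset n B N \<in> sets SQ" by (rule Hset_sets[OF Bb])
  have XSm: "(\<lambda>\<omega> k. X k \<omega>) \<in> measurable M SQ" by (rule XS_meas) simp
  have Npos: "real N > 0" using N2 by simp
  define a where "a i = real i / real N" for i
  have acond: "N \<ge> 2 \<and> a 0 = 0 \<and> a N = 1 \<and> (\<forall>i<N. a i < a (Suc i))"
    using N2 Npos by (auto simp: a_def divide_strict_right_mono)
  obtain \<Omega> :: "(nat \<Rightarrow> nat \<Rightarrow> real) measure" and Y where
    \<Omega>: "prob_space \<Omega>" and Ym: "\<forall>i<N. \<forall>j. Y i j \<in> borel_measurable \<Omega>"
    and same: "same_random_set (seq_law \<Omega> (\<lambda>k. Y (k mod N) (k div N))) (seq_law M X)"
    and ints: "\<forall>i<N. \<forall>j. AE \<omega> in \<Omega>. a i \<le> Y i j \<omega> \<and> Y i j \<omega> < a (Suc i)"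
    and ind: "prob_space.indep_vars \<Omega> (\<lambda>_. SQ) (\<lambda>i \<omega>. (\<lambda>j. Y i j \<omega>)) {..<N}"
    using indc acond unfolding independence_condition_def by blast
  interpret O: prob_space \<Omega> by fact
  define E where "E = (\<lambda>\<omega> k. Y (k mod N) (k div N) \<omega>)"
  have Em: "E \<in> measurable \<Omega> SQ"
    unfolding E_def by (rule XS_meas) (use Ym Npos in auto)
  have P_eq: "seq_law \<Omega> (\<lambda>k. Y (k mod N) (k div N)) = distr \<Omega> SQ E"
    unfolding seq_law_def E_def ..
  have Q_eq: "seq_law M X = distr M SQ (\<lambda>\<omega> k. X k \<omega>)"
    unfolding seq_law_def ..
  have acY: "absolutely_continuous lborel (distr \<Omega> borel (Y i j))" if i: "i < N" for i j
    unfolding absolutely_continuous_def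
  proof
    fix A :: "real set" assume A: "A \<in> null_sets lborel"
    have Ab: "A \<in> sets borel" using A by auto
    define W where "W = A \<union> - {0<..<1::real}"
    have Wb: "W \<in> sets borel" unfolding W_def using Ab by auto
    have HAs: "{z::nat\<Rightarrow>real. \<exists>k. z k \<in> W} \<in> sets SQ" by (rule HA_sets[OF Wb])
    have A01: "emeasure lborel (A \<inter> {0<..<1}) = 0"
    proof -
      have "A \<inter> {0<..<1} \<in> null_sets lborel"
        by (rule null_sets_subset[OF A]) (use Ab in auto)
      then show ?thesis by auto
    qed
    have "AE \<omega> in M. \<forall>k. X k \<omega> \<notin> A \<inter> {0<..<1}"
      by (rule null) (use Ab A01 in auto)
    then have "AE \<omega> in M. (\<lambda>k. X k \<omega>) \<notin> {z. \<exists>k. z k \<in> W}"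
      using AE_space by eventually_elim (use X01 in \<open>auto simp: W_def\<close>)
    then have "emeasure (seq_law M X) {z. \<exists>k. z k \<in> W} = 0"
      unfolding Q_eq using null_distr_iff[OF XSm HAs] by simp
    moreover have "emeasure (seq_law \<Omega> (\<lambda>k. Y (k mod N) (k div N))) {z. \<exists>k. z k \<in> W} =
        emeasure (seq_law M X) {z. \<exists>k. z k \<in> W}"
    proof (rule transfer_range[OF same HAs])
      fix z z' :: "nat \<Rightarrow> real" assume eq: "range z = range z'" and "z \<in> {z. \<exists>k. z k \<in> W}"
      then obtain k where "z k \<in> W" by auto
      moreover have "z k \<in> range z'" using eq by (metis rangeI)
      ultimately show "z' \<in> {z. \<exists>k. z k \<in> W}" by auto
    qed
    ultimately have "AE \<omega> in \<Omega>. E \<omega> \<notin> {z. \<exists>k. z k \<in> W}"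
      unfolding P_eq using null_distr_iff[OF Em HAs] by simp
    then have "AE \<omega> in \<Omega>. Y i j \<omega> \<notin> A"
    proof eventually_elim
      fix \<omega> assume "E \<omega> \<notin> {z. \<exists>k. z k \<in> W}"
      then have "E \<omega> (j * N + i) \<notin> W" by blast
      moreover have "(j * N + i) mod N = i" "(j * N + i) div N = j" using i by auto
      ultimately show "Y i j \<omega> \<notin> A" unfolding E_def W_def by auto
    qed
    moreover have Yijm: "Y i j \<in> borel_measurable \<Omega>" using Ym i by auto
    ultimately have "emeasure (distr \<Omega> borel (Y i j)) A = 0"
      using null_distr_iff[OF Yijm Ab] by simp
    then show "A \<in> null_sets (distr \<Omega> borel (Y i j))" using Ab by (auto simp: null_sets_def)
  qed
  have Yint: "AE \<omega> in \<Omega>. \<forall>i j. i < N \<longrightarrow> a i \<le> Y i j \<omega> \<and> Y i j \<omega> < a (Suc i)"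
    unfolding AE_all_countable
  proof (intro allI)
    fix i j show "AE \<omega> in \<Omega>. i < N \<longrightarrow> a i \<le> Y i j \<omega> \<and> Y i j \<omega> < a (Suc i)"
      by (cases "i < N") (use ints in auto)
  qed
  define T where "T = PiE {..<n} (\<lambda>_. UNIV::nat set)"
  have cT: "countable T" unfolding T_def by (intro countable_PiE) auto
  have keyall: "AE \<omega> in \<Omega>. \<forall>t\<in>T. inj_on (\<lambda>k. t k mod N) {..<n} \<longrightarrow>
      (\<lambda>k\<in>{..<n}. Y (t k mod N) (t k div N) \<omega>) \<notin> B"
  proof (rule AE_ball_countable'[OF _ cT])
    fix t assume "t \<in> T"
    show "AE \<omega> in \<Omega>. inj_on (\<lambda>k. t k mod N) {..<n} \<longrightarrow>
      (\<lambda>k\<in>{..<n}. Y (t k mod N) (t k div N) \<omega>) \<notin> B"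
    proof (cases "inj_on (\<lambda>k. t k mod N) {..<n}")
      case True
      have "AE \<omega> in \<Omega>. (\<lambda>k\<in>{..<n}. Y (t k mod N) (t k div N) \<omega>) \<notin> B"
        by (rule key_null[OF \<Omega> _ ind acY _ True npos B]) (use Ym Npos in auto)
      then show ?thesis by simp
    qed simp
  qed
  have "AE \<omega> in \<Omega>. E \<omega> \<notin> Hset n B N"
    using Yint keyall
  proof eventually_elim
    fix \<omega> assume Yi: "\<forall>i j. i < N \<longrightarrow> a i \<le> Y i j \<omega> \<and> Y i j \<omega> < a (Suc i)"
      and ka: "\<forall>t\<in>T. inj_on (\<lambda>k. t k mod N) {..<n} \<longrightarrow>
      (\<lambda>k\<in>{..<n}. Y (t k mod N) (t k div N) \<omega>) \<notin> B"
    show "E \<omega> \<notin> Hset n B N"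
    proof
      assume "E \<omega> \<in> Hset n B N"
      then obtain s \<sigma> where s: "s \<in> PiE {..<n} (\<lambda>_. range (E \<omega>))" "s \<in> B" and
        \<sigma>: "\<sigma> \<in> PiE {..<n} (\<lambda>_. {..<N})" "inj_on \<sigma> {..<n}"
        "\<forall>k<n. real (\<sigma> k) / N \<le> s k \<and> s k < (real (\<sigma> k) + 1) / N"
        unfolding Hset_def by blast
      define t where "t = (\<lambda>k\<in>{..<n}. SOME l. E \<omega> l = s k)"
      have zt: "E \<omega> (t k) = s k" if "k < n" for k
      proof -
        have "s k \<in> range (E \<omega>)" using s(1) that by (auto simp: PiE_def Pi_def)
        then have "\<exists>l. E \<omega> l = s k" by (metis rangeE)
        then show ?thesis unfolding t_def using that by (auto intro: someI_ex)
      qed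
      have tmod: "t k mod N = \<sigma> k" if k: "k < n" for k
      proof (rule interval_unique[OF Npos])
        have "t k mod N < N" using Npos by simp
        then have "a (t k mod N) \<le> Y (t k mod N) (t k div N) \<omega> \<and> Y (t k mod N) (t k div N) \<omega> < a (Suc (t k mod N))"
          using Yi by blast
        then show "real (t k mod N) / N \<le> s k" "s k < (real (t k mod N) + 1) / N"
          using zt[OF k] unfolding E_def a_def by (auto simp: add.commute)
        show "real (\<sigma> k) / N \<le> s k" "s k < (real (\<sigma> k) + 1) / N" using \<sigma>(3) k by auto
      qed
      have "t \<in> T" unfolding T_def t_def by auto
      moreover have "inj_on (\<lambda>k. t k mod N) {..<n}"
        using \<sigma>(2) tmod by (auto simp: inj_on_def)
      moreover have "(\<lambda>k\<in>{..<n}. Y (t k mod N) (t k div N) \<omega>) = s"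
        using zt s(1) by (auto simp: E_def PiE_def extensional_def fun_eq_iff)
      ultimately show False using ka s(2) by auto
    qed
  qed
  then have "emeasure (seq_law \<Omega> (\<lambda>k. Y (k mod N) (k div N))) (Hset n B N) = 0"
    unfolding P_eq using null_distr_iff[OF Em Hs] by simp
  moreover have "emeasure (seq_law \<Omega> (\<lambda>k. Y (k mod N) (k div N))) (Hset n B N) =
      emeasure (seq_law M X) (Hset n B N)"
    by (rule transfer_range[OF same Hs]) (auto simp: Hset_def)
  ultimately show ?thesis
    unfolding Q_eq using null_distr_iff[OF XSm Hs] by simp
qed

theorem lemma5p10:
  fixes M :: "'a measure" and X :: "nat \<Rightarrow> 'a \<Rightarrow> real"
  assumes "prob_space M"
    and "\<And>k. X k \<in> borel_measurable M"
    and "\<And>k \<omega>. \<omega> \<in> space M \<Longrightarrow> X k \<omega> \<in> {0<..<1}"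
    and dense: "AE \<omega> in M. {0<..<1} \<subseteq> closure (range (\<lambda>k. X k \<omega>))"
    and "independence_condition M X"
    and null: "\<And>B. B \<in> sets borel \<Longrightarrow> B \<subseteq> {0<..<1} \<Longrightarrow> emeasure lborel B = 0 \<Longrightarrow>
                 (AE \<omega> in M. \<forall>k. X k \<omega> \<notin> B)"
    and distinct: "\<And>k l. k \<noteq> l \<Longrightarrow> measure M {\<omega> \<in> space M. X k \<omega> = X l \<omega>} = 0"
  shows "\<forall>n. absolutely_continuous (PiM {..<n} (\<lambda>_. lborel))
              (distr M (PiM {..<n} (\<lambda>_. lborel)) (\<lambda>\<omega>. \<lambda>k\<in>{..<n}. X k \<omega>))"
proof
  fix n :: nat
  interpret M: prob_space M by fact
  note Xm[measurable] = assms(2)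
  define V where "V = (\<lambda>\<omega>. \<lambda>k\<in>{..<n}. X k \<omega>)"
  have Vm: "V \<in> measurable M (PiM {..<n} (\<lambda>_. lborel))"
    unfolding V_def by (rule measurable_restrict) simp
  define Q where "Q = seq_law M X"
  have XSm: "(\<lambda>\<omega> k. X k \<omega>) \<in> measurable M SQ" by (rule XS_meas) simp
  have Q_def': "Q = distr M SQ (\<lambda>\<omega> k. X k \<omega>)" unfolding Q_def seq_law_def ..
  have main: "AE \<omega> in M. V \<omega> \<notin> B" if B: "B \<in> null_sets (PiM {..<n} (\<lambda>_. lborel))" for B :: "(nat \<Rightarrow> real) set"
  proof (cases "n = 0")
    case True
    then have "B \<in> null_sets (count_space {\<lambda>_. undefined})" using B by (simp add: PiM_empty)
    then have "B = {}" by (simp add: null_sets_count_space)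
    then show ?thesis by simp
  next
    case False
    then have npos: "n > 0" by simp
    have Bb[measurable]: "B \<in> sets (PiM {..<n} (\<lambda>_. borel))"
      using B sets_PiM_cong[of "{..<n}" "{..<n}" "\<lambda>_. lborel" "\<lambda>_. borel"] by auto
    define H where "H N = Hset n B N" for N
    have HN: "AE \<omega> in M. (\<lambda>k. X k \<omega>) \<notin> H N" if N2: "N \<ge> 2" for N
      unfolding H_def by (rule HN_lemma[OF assms(1) assms(2) assms(3) assms(5) null B npos N2])
    have AEH: "AE \<omega> in M. \<forall>N. N \<ge> 2 \<longrightarrow> (\<lambda>k. X k \<omega>) \<notin> H N"
      unfolding AE_all_countable
    proof
      fix N show "AE \<omega> in M. N \<ge> 2 \<longrightarrow> (\<lambda>k. X k \<omega>) \<notin> H N"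
        by (cases "N \<ge> 2") (use HN in auto)
    qed
    have AED: "AE \<omega> in M. \<forall>k l. k \<noteq> l \<longrightarrow> X k \<omega> \<noteq> X l \<omega>"
      unfolding AE_all_countable
    proof (intro allI)
      fix k l
      show "AE \<omega> in M. k \<noteq> l \<longrightarrow> X k \<omega> \<noteq> X l \<omega>"
      proof (cases "k = l")
        case False
        have S: "{\<omega> \<in> space M. X k \<omega> = X l \<omega>} \<in> sets M" by measurable
        have "emeasure M {\<omega> \<in> space M. X k \<omega> = X l \<omega>} = 0"
          using distinct[OF False] S by (simp add: M.emeasure_eq_measure)
        then have "AE \<omega> in M. X k \<omega> \<noteq> X l \<omega>"
          by (subst AE_iff_measurable[OF S]) auto
        then show ?thesis by simp
      qed simp
    qed
    show ?thesis
      using AEH AED AE_space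
    proof eventually_elim
      fix \<omega> assume H: "\<forall>N. N \<ge> 2 \<longrightarrow> (\<lambda>k. X k \<omega>) \<notin> H N"
        and D: "\<forall>k l. k \<noteq> l \<longrightarrow> X k \<omega> \<noteq> X l \<omega>" and sp: "\<omega> \<in> space M"
      show "V \<omega> \<notin> B"
      proof
        assume VB: "V \<omega> \<in> B"
        obtain N \<sigma> where N: "N \<ge> 2" "\<sigma> \<in> PiE {..<n} (\<lambda>_. {..<N})" "inj_on \<sigma> {..<n}"
          "\<forall>k<n. real (\<sigma> k) / N \<le> X k \<omega> \<and> X k \<omega> < (real (\<sigma> k) + 1) / N"
          using separate[of n "\<lambda>k. X k \<omega>"] assms(3)[OF sp] D by blast
        have "(\<lambda>k. X k \<omega>) \<in> H N"
          unfolding H_def Hset_def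
        proof (intro CollectI bexI[of _ "V \<omega>"] conjI VB bexI[of _ \<sigma>])
          show "V \<omega> \<in> PiE {..<n} (\<lambda>_. range (\<lambda>k. X k \<omega>))" unfolding V_def by auto
        qed (use N in \<open>auto simp: V_def\<close>)
        then show False using H N(1) by auto
      qed
    qed
  qed
  show "absolutely_continuous (PiM {..<n} (\<lambda>_. lborel))
              (distr M (PiM {..<n} (\<lambda>_. lborel)) (\<lambda>\<omega>. \<lambda>k\<in>{..<n}. X k \<omega>))"
    unfolding absolutely_continuous_def
  proof
    fix B :: "(nat \<Rightarrow> real) set" assume B: "B \<in> null_sets (PiM {..<n} (\<lambda>_. lborel))"
    have Bs: "B \<in> sets (PiM {..<n} (\<lambda>_. lborel))" using B by auto
    have "emeasure (distr M (PiM {..<n} (\<lambda>_. lborel)) V) B = 0"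
      using null_distr_iff[OF Vm Bs] main[OF B] by simp
    then show "B \<in> null_sets (distr M (PiM {..<n} (\<lambda>_. lborel)) (\<lambda>\<omega>. \<lambda>k\<in>{..<n}. X k \<omega>))"
      using Bs unfolding V_def by (auto simp: null_sets_def)
  qed
qed

end
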